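(* For the semi-discrete finite volume scheme $\frac{d}{dt}\mathbf U_{i,j}=-\frac{\mathcal F_{i+\frac12,j}-\mathcal F_{i-\frac12,j}}{\Delta x}-\frac{\mathcal G_{i,j+\frac12}-\mathcal G_{i,j-\frac12}}{\Delta y}+\mathbf S_{i,j}$ for the stochastic Galerkin shallow water system, with numerical fluxes $\mathcal F=\mathcal F^{EC}$, $\mathcal G=\mathcal G^{EC}$ and source $\mathbf S_{i,j}$ as in the context, the local truncation error is $\mathcal O(\Delta x^2+\Delta y^2)$.
   Context: Let $\mathcal M_k\in\mathbb R^{K\times K}$, $(\mathcal M_k)_{l,m}=\int\phi_k\phi_l\phi_m\rho$, where $\phi_1\equiv1,\dots,\phi_K$ are polynomials orthonormal with respect to a probability density $\rho$ on $\mathbb R^d$ with all moments finite; $\mathcal P(\widehat z)=\sum_k\widehat z_k\mathcal M_k$; $g>0$. The SG shallow water system is $\widehat U_t+\widehat F(\widehat U)_x+\widehat G(\widehat U)_y=\widehat S(\widehat U)$, $\widehat U=(\widehat h,\widehat{q^x},\widehat{q^y})\in\mathbb R^{3K}$, $\widehat F=\big(\widehat{q^x};\ \mathcal P(\widehat{q^x})\mathcal P^{-1}(\widehat h)\widehat{q^x}+\tfrac12 g\mathcal P(\widehat h)\widehat h;\ \mathcal P(\widehat{q^x})\mathcal P^{-1}(\widehat h)\widehat{q^y}\big)$, $\widehat G=\big(\widehat{q^y};\ \mathcal P(\widehat{q^y})\mathcal P^{-1}(\widehat h)\widehat{q^x};\ \mathcal P(\widehat{q^y})\mathcal P^{-1}(\widehat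 h)\widehat{q^y}+\tfrac12 g\mathcal P(\widehat h)\widehat h\big)$, $\widehat S=\big(0;-g\mathcal P(\widehat h)\widehat B_x;-g\mathcal P(\widehat h)\widehat B_y\big)$, bottom $\widehat B(x,y)\in\mathbb R^K$. Uniform rectangular grid with cell sizes $\Delta x,\Delta y$ and centers $(x_i,y_j)$; cell values $\mathbf U_{i,j}=(\mathbf h_{i,j},\mathbf q^x_{i,j},\mathbf q^y_{i,j})$, $\mathbf B_{i,j}$; $\mathbf u_{i,j}=\mathcal P^{-1}(\mathbf h_{i,j})\mathbf q^x_{i,j}$, $\mathbf v_{i,j}=\mathcal P^{-1}(\mathbf h_{i,j})\mathbf q^y_{i,j}$. Averages/jumps: $\overline{\mathbf a}_{i+\frac12,j}=\tfrac12(\mathbf a_{i,j}+\mathbf a_{i+1,j})$, $[\![\mathbf a]\!]_{i+\frac12,j}=\mathbf a_{i+1,j}-\mathbf a_{i,j}$, and analogously in $j$; $\overline{\mathcal P(\mathbf h)\mathbf h}$ is the average of $\mathcal P(\mathbf h_{i,j})\mathbf h_{i,j}$. $\mathcal F^{EC}_{i+\frac12,j}=\big(\mathcal P(\overline{\mathbf h})\overline{\mathbf u};\ \tfrac12 g\,\overline{\mathcal P(\mathbf h)\mathbf h}+\mathcal P(\overline{\mathbf u})\mathcal P(\overline{\mathbf h})\overline{\mathbf u};\ \mathcal P(\overline{\mathbf v})\mathcal P(\overline{\mathbf h})\overline{\mathbf u}\big)_{i+\frac12,j}$, $\mathcal G^{EC}_{i,j+\frac12}=\big(\mathcal P(\overline{\mathbf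 h})\overline{\mathbf v};\ \mathcal P(\overline{\mathbf u})\mathcal P(\overline{\mathbf h})\overline{\mathbf v};\ \tfrac12 g\,\overline{\mathcal P(\mathbf h)\mathbf h}+\mathcal P(\overline{\mathbf v})\mathcal P(\overline{\mathbf h})\overline{\mathbf v}\big)_{i,j+\frac12}$, $\mathbf S_{i,j}=\Big(0;\ -\tfrac{g}{2\Delta x}\big(\mathcal P(\overline{\mathbf h}_{i+\frac12,j})[\![\mathbf B]\!]_{i+\frac12,j}+\mathcal P(\overline{\mathbf h}_{i-\frac12,j})[\![\mathbf B]\!]_{i-\frac12,j}\big);\ -\tfrac{g}{2\Delta y}\big(\mathcal P(\overline{\mathbf h}_{i,j+\frac12})[\![\mathbf B]\!]_{i,j+\frac12}+\mathcal P(\overline{\mathbf h}_{i,j-\frac12})[\![\mathbf B]\!]_{i,j-\frac12}\big)\Big)$. Local truncation error $\mathcal O(\Delta x^2+\Delta y^2)$ means: for smooth $\widehat U,\widehat B$ with $\mathcal P(\widehat h)$ positive definite, taking $\mathbf U_{i,j}=\widehat U(x_i,y_j)$, $\mathbf B_{i,j}=\widehat B(x_i,y_j)$, the right-hand side of the scheme equals $\big(-\widehat F(\widehat U)_x-\widehat G(\widehat U)_y+\widehat S(\widehat U)\big)(x_i,y_j)+\mathcal O(\Delta x^2+\Delta y^2)$. *)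

theory Defs
  imports "HOL-Analysis.Analysis" "HOL-Library.Landau_Symbols"
begin

definition monomial_d :: "('d::finite \<Rightarrow> nat) \<Rightarrow> real^'d \<Rightarrow> real" where
  "monomial_d \<alpha> x = (\<Prod>i\<in>UNIV. (x $ i) ^ (\<alpha> i))"

definition is_polynomial_d :: "(real^'d::finite \<Rightarrow> real) \<Rightarrow> bool" where
  "is_polynomial_d f \<longleftrightarrow> (\<exists>A c. finite A \<and> f = (\<lambda>x. \<Sum>\<alpha>\<in>A. c \<alpha> * monomial_d \<alpha> x))"

definition prob_density_all_moments :: "(real^'d::finite \<Rightarrow> real) \<Rightarrow> bool" where
  "prob_density_all_moments \<rho> \<longleftrightarrow>
     \<rho> \<in> borel_measurable lborel \<and> (\<forall>x. 0 \<le> \<rho> x) \<and>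
     integrable lborel \<rho> \<and> integral\<^sup>L lborel \<rho> = 1 \<and>
     (\<forall>\<alpha>. integrable lborel (\<lambda>x. monomial_d \<alpha> x * \<rho> x))"

definition orthonormal_pc_basis ::
    "(real^'d::finite \<Rightarrow> real) \<Rightarrow> ('k::finite \<Rightarrow> real^'d \<Rightarrow> real) \<Rightarrow> 'k \<Rightarrow> bool" where
  "orthonormal_pc_basis \<rho> \<phi> k1 \<longleftrightarrow>
     prob_density_all_moments \<rho> \<and>
     (\<forall>k. is_polynomial_d (\<phi> k)) \<and>
     \<phi> k1 = (\<lambda>_. 1) \<and>
     (\<forall>k l. integral\<^sup>L lborel (\<lambda>x. \<phi> k x * \<phi> l x * \<rho> x) = (if k = l then 1 else 0))"

definition Mtens :: "(real^'d::finite \<Rightarrow> real) \<Rightarrow> ('k::finite \<Rightarrow> real^'d \<Rightarrow> real) \<Rightarrow> 'k \<Rightarrow> real^'k^'k" where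
  "Mtens \<rho> \<phi> k = (\<chi> l m. integral\<^sup>L lborel (\<lambda>x. \<phi> k x * \<phi> l x * \<phi> m x * \<rho> x))"

definition Pm :: "('k::finite \<Rightarrow> real^'k^'k) \<Rightarrow> real^'k \<Rightarrow> real^'k^'k" where
  "Pm M z = (\<Sum>k\<in>UNIV. (z $ k) *\<^sub>R M k)"

definition Pinv :: "('k::finite \<Rightarrow> real^'k^'k) \<Rightarrow> real^'k \<Rightarrow> real^'k^'k" where
  "Pinv M z = matrix_inv (Pm M z)"

definition pos_def :: "real^'k^'k \<Rightarrow> bool" where
  "pos_def A \<longleftrightarrow> (\<forall>v. v \<noteq> 0 \<longrightarrow> v \<bullet> (A *v v) > 0)"

type_synonym 'k state = "(real^'k) \<times> (real^'k) \<times> (real^'k)"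

definition Fhat :: "real \<Rightarrow> ('k::finite \<Rightarrow> real^'k^'k) \<Rightarrow> 'k state \<Rightarrow> 'k state" where
  "Fhat g M U = (case U of (h, qx, qy) \<Rightarrow>
     (qx,
      Pm M qx *v (Pinv M h *v qx) + (g / 2) *\<^sub>R (Pm M h *v h),
      Pm M qx *v (Pinv M h *v qy)))"

definition Ghat :: "real \<Rightarrow> ('k::finite \<Rightarrow> real^'k^'k) \<Rightarrow> 'k state \<Rightarrow> 'k state" where
  "Ghat g M U = (case U of (h, qx, qy) \<Rightarrow>
     (qy,
      Pm M qy *v (Pinv M h *v qx),
      Pm M qy *v (Pinv M h *v qy) + (g / 2) *\<^sub>R (Pm M h *v h)))"

text \<open>Source term, given the bottom derivatives Bx, By.\<close>
definition Shat :: "real \<Rightarrow> ('k::finite \<Rightarrow> real^'k^'k) \<Rightarrow> 'k state \<Rightarrow> real^'k \<Rightarrow> real^'k \<Rightarrow> 'k state" where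
  "Shat g M U Bx By = (case U of (h, qx, qy) \<Rightarrow>
     (0, - g *\<^sub>R (Pm M h *v Bx), - g *\<^sub>R (Pm M h *v By)))"

fun Ck_on :: "nat \<Rightarrow> ('a::real_normed_vector) set \<Rightarrow> ('a \<Rightarrow> 'b::real_normed_vector) \<Rightarrow> bool" where
  "Ck_on 0 S f = continuous_on S f"
| "Ck_on (Suc n) S f = (f differentiable_on S \<and>
      (\<forall>v. Ck_on n S (\<lambda>p. frechet_derivative f (at p) v)))"

definition smooth_on :: "('a::real_normed_vector) set \<Rightarrow> ('a \<Rightarrow> 'b::real_normed_vector) \<Rightarrow> bool" where
  "smooth_on S f \<longleftrightarrow> (\<forall>n. Ck_on n S f)"

definition avg :: "real^'k \<Rightarrow> real^'k \<Rightarrow> real^'k" where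
  "avg a b = (1/2) *\<^sub>R (a + b)"

definition vel_u :: "('k::finite \<Rightarrow> real^'k^'k) \<Rightarrow> 'k state \<Rightarrow> real^'k" where
  "vel_u M U = (case U of (h, qx, qy) \<Rightarrow> Pinv M h *v qx)"

definition vel_v :: "('k::finite \<Rightarrow> real^'k^'k) \<Rightarrow> 'k state \<Rightarrow> real^'k" where
  "vel_v M U = (case U of (h, qx, qy) \<Rightarrow> Pinv M h *v qy)"

definition depth :: "'k state \<Rightarrow> real^'k" where
  "depth U = fst U"

text \<open>F^EC between a left state UL = U_{i,j} and a right state UR = U_{i+1,j}.\<close>
definition FEC :: "real \<Rightarrow> ('k::finite \<Rightarrow> real^'k^'k) \<Rightarrow> 'k state \<Rightarrow> 'k state \<Rightarrow> 'k state" where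
  "FEC g M UL UR =
    (let hb = avg (depth UL) (depth UR);
         ub = avg (vel_u M UL) (vel_u M UR);
         vb = avg (vel_v M UL) (vel_v M UR);
         phh = avg (Pm M (depth UL) *v depth UL) (Pm M (depth UR) *v depth UR)
     in (Pm M hb *v ub,
         (g / 2) *\<^sub>R phh + Pm M ub *v (Pm M hb *v ub),
         Pm M vb *v (Pm M hb *v ub)))"

text \<open>G^EC between a lower state UD = U_{i,j} and an upper state UU = U_{i,j+1}.\<close>
definition GEC :: "real \<Rightarrow> ('k::finite \<Rightarrow> real^'k^'k) \<Rightarrow> 'k state \<Rightarrow> 'k state \<Rightarrow> 'k state" where
  "GEC g M UD UU =
    (let hb = avg (depth UD) (depth UU);
         ub = avg (vel_u M UD) (vel_u M UU);
         vb = avg (vel_v M UD) (vel_v M UU);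
         phh = avg (Pm M (depth UD) *v depth UD) (Pm M (depth UU) *v depth UU)
     in (Pm M hb *v vb,
         Pm M ub *v (Pm M hb *v vb),
         (g / 2) *\<^sub>R phh + Pm M vb *v (Pm M hb *v vb)))"

definition Sdisc :: "real \<Rightarrow> ('k::finite \<Rightarrow> real^'k^'k) \<Rightarrow> real \<Rightarrow> real \<Rightarrow>
     (int \<Rightarrow> int \<Rightarrow> 'k state) \<Rightarrow> (int \<Rightarrow> int \<Rightarrow> real^'k) \<Rightarrow> int \<Rightarrow> int \<Rightarrow> 'k state" where
  "Sdisc g M dx dy U B i j =
    (let h = (\<lambda>i j. depth (U i j)) in
     (0,
      - (g / (2 * dx)) *\<^sub>R
          (Pm M (avg (h i j) (h (i+1) j)) *v (B (i+1) j - B i j)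
         + Pm M (avg (h (i-1) j) (h i j)) *v (B i j - B (i-1) j)),
      - (g / (2 * dy)) *\<^sub>R
          (Pm M (avg (h i j) (h i (j+1))) *v (B i (j+1) - B i j)
         + Pm M (avg (h i (j-1)) (h i j)) *v (B i j - B i (j-1)))))"

definition scheme_rhs :: "real \<Rightarrow> ('k::finite \<Rightarrow> real^'k^'k) \<Rightarrow> real \<Rightarrow> real \<Rightarrow>
     (int \<Rightarrow> int \<Rightarrow> 'k state) \<Rightarrow> (int \<Rightarrow> int \<Rightarrow> real^'k) \<Rightarrow> int \<Rightarrow> int \<Rightarrow> 'k state" where
  "scheme_rhs g M dx dy U B i j =
     - (1 / dx) *\<^sub>R (FEC g M (U i j) (U (i+1) j) - FEC g M (U (i-1) j) (U i j))
     - (1 / dy) *\<^sub>R (GEC g M (U i j) (U i (j+1)) - GEC g M (U i (j-1)) (U i j))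
     + Sdisc g M dx dy U B i j"

definition pde_rhs :: "real \<Rightarrow> ('k::finite \<Rightarrow> real^'k^'k) \<Rightarrow>
     (real \<times> real \<Rightarrow> 'k state) \<Rightarrow> (real \<times> real \<Rightarrow> real^'k) \<Rightarrow> real \<Rightarrow> real \<Rightarrow> 'k state" where
  "pde_rhs g M U B x0 y0 =
     - vector_derivative (\<lambda>s. Fhat g M (U (s, y0))) (at x0)
     - vector_derivative (\<lambda>t. Ghat g M (U (x0, t))) (at y0)
     + Shat g M (U (x0, y0))
         (vector_derivative (\<lambda>s. B (s, y0)) (at x0))
         (vector_derivative (\<lambda>t. B (x0, t)) (at y0))"

end

theory Submission
  imports Defs
begin


definition bnd :: "(real \<Rightarrow> 'a::real_normed_vector) \<Rightarrow> bool" where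
  "bnd R \<longleftrightarrow> (\<exists>M. eventually (\<lambda>t. norm (R t) \<le> M) (nhds 0))"

definition texp :: "(real \<Rightarrow> 'a::real_normed_vector) \<Rightarrow> 'a \<Rightarrow> 'a \<Rightarrow> 'a \<Rightarrow> bool" where
  "texp f c0 c1 c2 \<longleftrightarrow> (\<exists>R. bnd R \<and>
     eventually (\<lambda>t. f t = c0 + t *\<^sub>R c1 + (t^2) *\<^sub>R c2 + (t^3) *\<^sub>R R t) (nhds 0))"

lemma bnd_const: "bnd (\<lambda>t. c)"
  unfolding bnd_def by (rule exI[of _ "norm c"]) simp

lemma bnd_add: "bnd f \<Longrightarrow> bnd g \<Longrightarrow> bnd (\<lambda>t. f t + g t)"
  unfolding bnd_def
proof (elim exE)
  fix M N assume "eventually (\<lambda>t. norm (f t) \<le> M) (nhds 0)" "eventually (\<lambda>t. norm (g t) \<le> N) (nhds 0)"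
  then have "eventually (\<lambda>t. norm (f t + g t) \<le> M + N) (nhds 0)"
    by eventually_elim (meson add_mono norm_triangle_le)
  then show "\<exists>M. eventually (\<lambda>t. norm (f t + g t) \<le> M) (nhds 0)" by blast
qed

lemma bnd_scale: "bnd f \<Longrightarrow> bnd (\<lambda>t. c *\<^sub>R f t)"
  unfolding bnd_def
proof (elim exE)
  fix M assume "eventually (\<lambda>t. norm (f t) \<le> M) (nhds 0)"
  then have "eventually (\<lambda>t. norm (c *\<^sub>R f t) \<le> \<bar>c\<bar> * M) (nhds 0)"
    by eventually_elim (simp add: mult_left_mono)
  then show "\<exists>M. eventually (\<lambda>t. norm (c *\<^sub>R f t) \<le> M) (nhds 0)" by blast
qed

lemma eventually_abs_lt: "e > 0 \<Longrightarrow> eventually (\<lambda>t::real. \<bar>t\<bar> < e) (nhds 0)"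
  unfolding eventually_nhds_metric by (intro exI[of _ e]) (auto simp: dist_real_def)

lemma bnd_tscale: "bnd f \<Longrightarrow> bnd (\<lambda>t. t *\<^sub>R f t)"
  unfolding bnd_def
proof (elim exE)
  fix M assume "eventually (\<lambda>t. norm (f t) \<le> M) (nhds 0)"
  moreover have "eventually (\<lambda>t::real. \<bar>t\<bar> < 1) (nhds 0)" using eventually_abs_lt[of 1] by simp
  ultimately have "eventually (\<lambda>t. norm (t *\<^sub>R f t) \<le> \<bar>M\<bar>) (nhds 0)"
  proof eventually_elim
    case (elim t)
    have "norm (t *\<^sub>R f t) = \<bar>t\<bar> * norm (f t)" by simp
    also have "\<dots> \<le> 1 * \<bar>M\<bar>" using elim by (intro mult_mono) auto
    finally show ?case by simp
  qed
  then show "\<exists>M. eventually (\<lambda>t. norm (t *\<^sub>R f t) \<le> M) (nhds 0)" by blast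
qed

lemma bnd_bilinear: assumes "bounded_bilinear pr" "bnd f" "bnd g" shows "bnd (\<lambda>t. pr (f t) (g t))"
proof -
  obtain K where K: "\<And>a b. norm (pr a b) \<le> norm a * norm b * K" "K > 0"
    using bounded_bilinear.pos_bounded[OF assms(1)] by blast
  obtain M N where "eventually (\<lambda>t. norm (f t) \<le> M) (nhds 0)" "eventually (\<lambda>t. norm (g t) \<le> N) (nhds 0)"
    using assms(2,3) unfolding bnd_def by blast
  then have "eventually (\<lambda>t. norm (pr (f t) (g t)) \<le> M * N * K) (nhds 0)"
  proof eventually_elim
    case (elim t)
    have "norm (pr (f t) (g t)) \<le> norm (f t) * norm (g t) * K" by (rule K)
    also have "\<dots> \<le> M * N * K" using elim K(2) by (intro mult_right_mono mult_mono) (auto intro: order_trans[OF norm_ge_zero])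
    finally show ?case .
  qed
  then show ?thesis unfolding bnd_def by blast
qed

lemma bnd_Pair: "bnd f \<Longrightarrow> bnd g \<Longrightarrow> bnd (\<lambda>t. (f t, g t))"
  unfolding bnd_def
proof (elim exE)
  fix M N assume "eventually (\<lambda>t. norm (f t) \<le> M) (nhds 0)" "eventually (\<lambda>t. norm (g t) \<le> N) (nhds 0)"
  then have "eventually (\<lambda>t. norm (f t, g t) \<le> M + N) (nhds 0)"
    by eventually_elim (meson add_mono norm_Pair_le order_trans)
  then show "\<exists>M. eventually (\<lambda>t. norm (f t, g t) \<le> M) (nhds 0)" by blast
qed

lemma bnd_cong: "bnd f \<Longrightarrow> eventually (\<lambda>t. f t = g t) (nhds 0) \<Longrightarrow> bnd g"
  unfolding bnd_def
proof (elim exE)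
  fix M assume "eventually (\<lambda>t. norm (f t) \<le> M) (nhds 0)" "eventually (\<lambda>t. f t = g t) (nhds 0)"
  then have "eventually (\<lambda>t. norm (g t) \<le> M) (nhds 0)" by eventually_elim simp
  then show "\<exists>M. eventually (\<lambda>t. norm (g t) \<le> M) (nhds 0)" by blast
qed

lemma texp_at0: "texp f c0 c1 c2 \<Longrightarrow> f 0 = c0"
  unfolding texp_def by (auto dest: eventually_nhds_x_imp_x)

lemma texp_const: "texp (\<lambda>t. c) c 0 0"
  unfolding texp_def by (intro exI[of _ "\<lambda>t. 0"]) (simp add: bnd_const)

lemma texp_poly: "texp (\<lambda>t. a0 + t *\<^sub>R a1 + (t^2) *\<^sub>R a2) a0 a1 a2"
  unfolding texp_def by (intro exI[of _ "\<lambda>t. 0"]) (simp add: bnd_const)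

lemma texp_add: assumes "texp f a0 a1 a2" "texp g b0 b1 b2" shows "texp (\<lambda>t. f t + g t) (a0+b0) (a1+b1) (a2+b2)"
proof -
  obtain R S where "bnd R" "bnd S" "\<forall>\<^sub>F t in nhds 0. f t = a0 + t *\<^sub>R a1 + t\<^sup>2 *\<^sub>R a2 + t ^ 3 *\<^sub>R R t"
    "\<forall>\<^sub>F t in nhds 0. g t = b0 + t *\<^sub>R b1 + t\<^sup>2 *\<^sub>R b2 + t ^ 3 *\<^sub>R S t"
    using assms unfolding texp_def by blast
  then show ?thesis unfolding texp_def
    by (intro exI[of _ "\<lambda>t. R t + S t"] conjI bnd_add) (auto elim: eventually_elim2 simp: algebra_simps)
qed

lemma texp_scale: "texp f a0 a1 a2 \<Longrightarrow> texp (\<lambda>t. c *\<^sub>R f t) (c *\<^sub>R a0) (c *\<^sub>R a1) (c *\<^sub>R a2)"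
  unfolding texp_def
proof (elim exE conjE)
  fix R assume "bnd R" "\<forall>\<^sub>F t in nhds 0. f t = a0 + t *\<^sub>R a1 + t\<^sup>2 *\<^sub>R a2 + t ^ 3 *\<^sub>R R t"
  then show "\<exists>R. bnd R \<and> (\<forall>\<^sub>F t in nhds 0. c *\<^sub>R f t = c *\<^sub>R a0 + t *\<^sub>R c *\<^sub>R a1 + t\<^sup>2 *\<^sub>R c *\<^sub>R a2 + t ^ 3 *\<^sub>R R t)"
    by (intro exI[of _ "\<lambda>t. c *\<^sub>R R t"] conjI bnd_scale) (auto elim: eventually_mono simp: algebra_simps)
qed

lemma texp_Pair: assumes "texp f a0 a1 a2" "texp g b0 b1 b2" shows "texp (\<lambda>t. (f t, g t)) (a0,b0) (a1,b1) (a2,b2)"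
proof -
  obtain R S where "bnd R" "bnd S" "\<forall>\<^sub>F t in nhds 0. f t = a0 + t *\<^sub>R a1 + t\<^sup>2 *\<^sub>R a2 + t ^ 3 *\<^sub>R R t"
    "\<forall>\<^sub>F t in nhds 0. g t = b0 + t *\<^sub>R b1 + t\<^sup>2 *\<^sub>R b2 + t ^ 3 *\<^sub>R S t"
    using assms unfolding texp_def by blast
  then show ?thesis unfolding texp_def
    by (intro exI[of _ "\<lambda>t. (R t, S t)"] conjI bnd_Pair) (auto elim: eventually_elim2 simp: algebra_simps)
qed

lemma texp_cong: assumes "texp f a0 a1 a2" "eventually (\<lambda>t. f t = g t) (nhds 0)" shows "texp g a0 a1 a2"
proof -
  obtain R where "bnd R" "eventually (\<lambda>t. f t = a0 + t *\<^sub>R a1 + (t^2) *\<^sub>R a2 + (t^3) *\<^sub>R R t) (nhds 0)"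
    using assms(1) unfolding texp_def by blast
  with assms(2) show ?thesis unfolding texp_def
    by (intro exI[of _ R]) (auto elim: eventually_elim2)
qed


lemma bnd_poly: "bnd (\<lambda>t. a0 + t *\<^sub>R a1 + (t^2) *\<^sub>R a2 + (t^3) *\<^sub>R R t)" if "bnd R"
proof -
  have "bnd (\<lambda>t. a0 + t *\<^sub>R (a1 + t *\<^sub>R (a2 + t *\<^sub>R R t)))"
    by (intro bnd_add bnd_const bnd_tscale that)
  then show ?thesis
    by (rule bnd_cong) (simp add: algebra_simps power2_eq_square power3_eq_cube)
qed

lemma texp_bnd: "texp f a0 a1 a2 \<Longrightarrow> bnd f"
  unfolding texp_def by (auto intro: bnd_cong[OF bnd_poly] simp: eventually_mono eq_commute)

lemma texp_bilinear:
  assumes bb: "bounded_bilinear pr" and F: "texp f a0 a1 a2" and G: "texp g b0 b1 b2"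
  shows "texp (\<lambda>t. pr (f t) (g t)) (pr a0 b0) (pr a0 b1 + pr a1 b0) (pr a0 b2 + pr a1 b1 + pr a2 b0)"
proof -
  interpret bounded_bilinear pr by (rule bb)
  obtain R S where R: "bnd R" "\<forall>\<^sub>F t in nhds 0. f t = a0 + t *\<^sub>R a1 + t\<^sup>2 *\<^sub>R a2 + t ^ 3 *\<^sub>R R t"
    and S: "bnd S" "\<forall>\<^sub>F t in nhds 0. g t = b0 + t *\<^sub>R b1 + t\<^sup>2 *\<^sub>R b2 + t ^ 3 *\<^sub>R S t"
    using F G unfolding texp_def by blast
  define pf where "pf t = a0 + t *\<^sub>R a1 + t\<^sup>2 *\<^sub>R a2" for t
  define pg where "pg t = b0 + t *\<^sub>R b1 + t\<^sup>2 *\<^sub>R b2" for t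
  define Q where "Q t = pr a1 b2 + pr a2 b1 + t *\<^sub>R pr a2 b2 + pr (pf t) (S t) + pr (R t) (g t)" for t
  have "bnd pf" unfolding pf_def by (rule bnd_cong[OF bnd_poly[OF bnd_const[of 0], of a0 a1 a2]]) simp
  then have bQ: "bnd Q" unfolding Q_def
    by (intro bnd_add bnd_const bnd_tscale bnd_bilinear[OF bb] R S texp_bnd[OF G])
  have pp: "pr (pf t) (pg t) = pr a0 b0 + t *\<^sub>R (pr a0 b1 + pr a1 b0) + t\<^sup>2 *\<^sub>R (pr a0 b2 + pr a1 b1 + pr a2 b0)
      + t^3 *\<^sub>R (pr a1 b2 + pr a2 b1 + t *\<^sub>R pr a2 b2)" for t
    unfolding pf_def pg_def
    by (simp add: add_left add_right scaleR_left scaleR_right scaleR_add_right algebra_simps power2_eq_square power3_eq_cube)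
  have "\<forall>\<^sub>F t in nhds 0. pr (f t) (g t) = pr a0 b0 + t *\<^sub>R (pr a0 b1 + pr a1 b0) + t\<^sup>2 *\<^sub>R (pr a0 b2 + pr a1 b1 + pr a2 b0) + t^3 *\<^sub>R Q t"
    using R(2) S(2)
  proof eventually_elim
    case (elim t)
    have "pr (f t) (g t) = pr (pf t + t^3 *\<^sub>R R t) (g t)" using elim(1) by (simp add: pf_def)
    also have "\<dots> = pr (pf t) (g t) + t^3 *\<^sub>R pr (R t) (g t)" by (simp add: add_left scaleR_left)
    also have "pr (pf t) (g t) = pr (pf t) (pg t + t^3 *\<^sub>R S t)" using elim(2) by (simp add: pg_def)
    also have "\<dots> = pr (pf t) (pg t) + t^3 *\<^sub>R pr (pf t) (S t)" by (simp add: add_right scaleR_right)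
    finally show ?case unfolding pp Q_def by (simp add: algebra_simps)
  qed
  with bQ show ?thesis unfolding texp_def by blast
qed


lemma texp_obtain:
  assumes "texp f c0 c1 c2"
  obtains R M d where "d > 0" "\<And>t. \<bar>t\<bar> < d \<Longrightarrow> f t = c0 + t *\<^sub>R c1 + (t^2) *\<^sub>R c2 + (t^3) *\<^sub>R R t \<and> norm (R t) \<le> M"
proof -
  obtain R M where "eventually (\<lambda>t. norm (R t) \<le> M) (nhds 0)"
    "eventually (\<lambda>t. f t = c0 + t *\<^sub>R c1 + (t^2) *\<^sub>R c2 + (t^3) *\<^sub>R R t) (nhds 0)"
    using assms unfolding texp_def bnd_def by blast
  then have "eventually (\<lambda>t. f t = c0 + t *\<^sub>R c1 + (t^2) *\<^sub>R c2 + (t^3) *\<^sub>R R t \<and> norm (R t) \<le> M) (nhds 0)"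
    by (rule eventually_elim2) auto
  then obtain d where "d > 0" "\<And>t. dist t 0 < d \<Longrightarrow> f t = c0 + t *\<^sub>R c1 + (t^2) *\<^sub>R c2 + (t^3) *\<^sub>R R t \<and> norm (R t) \<le> M"
    unfolding eventually_nhds_metric by blast
  then show ?thesis by (intro that) (auto simp: dist_real_def)
qed

lemma texp_deriv: assumes "texp f c0 c1 c2" shows "(f has_vector_derivative c1) (at 0)"
proof -
  obtain R M d where d: "d > 0" "\<And>t. \<bar>t\<bar> < d \<Longrightarrow> f t = c0 + t *\<^sub>R c1 + (t^2) *\<^sub>R c2 + (t^3) *\<^sub>R R t \<and> norm (R t) \<le> M"
    using texp_obtain[OF assms] by metis
  have f0: "f 0 = c0" using d(2)[of 0] \<open>d>0\<close> by simp
  show ?thesis unfolding has_vector_derivative_def has_derivative_at_alt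
  proof (intro conjI allI impI bounded_linear_scaleR_left)
    fix e :: real assume "e > 0"
    define K where "K = norm c2 + \<bar>M\<bar> + 1"
    have K: "K > 0" unfolding K_def by (smt (verit) norm_ge_zero)
    define d' where "d' = min (min d 1) (e / K)"
    have "d' > 0" unfolding d'_def using d K \<open>e>0\<close> by simp
    moreover have "norm (f y - f 0 - (y - 0) *\<^sub>R c1) \<le> e * norm (y - 0)" if "norm (y - 0) < d'" for y
    proof -
      have y: "\<bar>y\<bar> < d" "\<bar>y\<bar> < 1" "\<bar>y\<bar> < e / K" using that unfolding d'_def by auto
      have "f y - f 0 - (y - 0) *\<^sub>R c1 = (y^2) *\<^sub>R (c2 + y *\<^sub>R R y)"
        using d(2)[OF y(1)] f0 by (simp add: algebra_simps power2_eq_square power3_eq_cube)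
      also have "norm \<dots> = \<bar>y\<bar> * (\<bar>y\<bar> * norm (c2 + y *\<^sub>R R y))" by (simp add: power2_eq_square)
      also have "\<dots> \<le> \<bar>y\<bar> * (e / K * K)"
      proof (intro mult_left_mono mult_mono)
        show "\<bar>y\<bar> \<le> e / K" using y by simp
        have "norm (c2 + y *\<^sub>R R y) \<le> norm c2 + \<bar>y\<bar> * norm (R y)" by (metis norm_scaleR norm_triangle_ineq)
        also have "\<dots> \<le> norm c2 + 1 * \<bar>M\<bar>" using y d(2)[OF y(1)] by (intro add_left_mono mult_mono) auto
        finally show "norm (c2 + y *\<^sub>R R y) \<le> K" unfolding K_def by simp
      qed (use \<open>e>0\<close> K in auto)
      also have "\<dots> = e * norm (y - 0)" using K by simp
      finally show ?thesis .
    qed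
    ultimately show "\<exists>d>0. \<forall>y. norm (y - 0) < d \<longrightarrow> norm (f y - f 0 - (y - 0) *\<^sub>R c1) \<le> e * norm (y - 0)"
      by blast
  qed
qed

lemma texp_central:
  assumes "texp f c0 c1 c2"
  shows "\<exists>C d. d > 0 \<and> (\<forall>t. 0 < t \<and> t < d \<longrightarrow> norm ((1/t) *\<^sub>R (f t - f (-t)) - 2 *\<^sub>R c1) \<le> C * t^2)"
proof -
  obtain R M d where d: "d > 0" "\<And>t. \<bar>t\<bar> < d \<Longrightarrow> f t = c0 + t *\<^sub>R c1 + (t^2) *\<^sub>R c2 + (t^3) *\<^sub>R R t \<and> norm (R t) \<le> M"
    using texp_obtain[OF assms] by metis
  have "norm ((1/t) *\<^sub>R (f t - f (-t)) - 2 *\<^sub>R c1) \<le> (2*M) * t^2" if t: "0 < t" "t < d" for t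
  proof -
    have a: "f t = c0 + t *\<^sub>R c1 + (t^2) *\<^sub>R c2 + (t^3) *\<^sub>R R t" "norm (R t) \<le> M"
      and b: "f (-t) = c0 + (-t) *\<^sub>R c1 + (t^2) *\<^sub>R c2 - (t^3) *\<^sub>R R (-t)" "norm (R (-t)) \<le> M"
      using d(2)[of t] d(2)[of "-t"] t by auto
    have "(1/t) *\<^sub>R (f t - f (-t)) - 2 *\<^sub>R c1 = (t^2) *\<^sub>R (R t + R (-t))"
      unfolding a(1) b(1) using t by (simp add: algebra_simps power2_eq_square power3_eq_cube scaleR_2)
    also have "norm \<dots> \<le> t^2 * (M + M)"
      using a(2) b(2) by (simp add: mult_left_mono norm_triangle_le)
    finally show ?thesis by (simp add: algebra_simps)
  qed
  then show ?thesis using d(1) by blast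
qed




lemma Pm_mult_comp: "(Pm M a *v b) $ l = (\<Sum>k\<in>UNIV. a$k * (\<Sum>m\<in>UNIV. M k $ l $ m * b$m))"
proof -
  have "(Pm M a *v b) $ l = (\<Sum>m\<in>UNIV. (\<Sum>k\<in>UNIV. a$k * M k $ l $ m) * b$m)"
    by (simp add: Pm_def matrix_vector_mult_def sum_component)
  also have "\<dots> = (\<Sum>m\<in>UNIV. \<Sum>k\<in>UNIV. a$k * (M k $ l $ m * b$m))"
    by (simp add: sum_distrib_right mult.assoc)
  also have "\<dots> = (\<Sum>k\<in>UNIV. \<Sum>m\<in>UNIV. a$k * (M k $ l $ m * b$m))"
    by (rule sum.swap)
  also have "\<dots> = (\<Sum>k\<in>UNIV. a$k * (\<Sum>m\<in>UNIV. M k $ l $ m * b$m))"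
    by (simp add: sum_distrib_left)
  finally show ?thesis .
qed

lemma Pm_bilinear: "bounded_bilinear (\<lambda>a b. Pm M a *v (b::real^'k::finite))"
proof -
  have "bilinear (\<lambda>a b. Pm M a *v (b::real^'k::finite))"
    unfolding bilinear_def
  proof (intro conjI allI)
    fix b :: "real^'k" show "linear (\<lambda>a. Pm M a *v b)"
      by (rule linearI) (simp_all add: vec_eq_iff Pm_mult_comp algebra_simps sum.distrib sum_distrib_left)
  next
    fix a :: "real^'k" show "linear (\<lambda>b. Pm M a *v b)" by simp
  qed
  then show ?thesis by (simp add: bilinear_conv_bounded_bilinear)
qed

lemma Mtens_sym: "Mtens \<rho> \<phi> k $ l $ m = Mtens \<rho> \<phi> m $ l $ k"
  unfolding Mtens_def by (simp add: mult_ac)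

lemma Pm_sym: "Pm (Mtens \<rho> \<phi>) a *v b = Pm (Mtens \<rho> \<phi>) b *v a"
proof -
  have "(\<Sum>k\<in>UNIV. a$k * (\<Sum>m\<in>UNIV. Mtens \<rho> \<phi> k $ l $ m * b$m))
      = (\<Sum>k\<in>UNIV. b$k * (\<Sum>m\<in>UNIV. Mtens \<rho> \<phi> k $ l $ m * a$m))" for l
  proof -
    have "(\<Sum>k\<in>UNIV. a$k * (\<Sum>m\<in>UNIV. Mtens \<rho> \<phi> k $ l $ m * b$m))
        = (\<Sum>k\<in>UNIV. \<Sum>m\<in>UNIV. a$k * Mtens \<rho> \<phi> m $ l $ k * b$m)"
      by (simp add: sum_distrib_left mult.assoc Mtens_sym[of \<rho> \<phi> _ l])
    also have "\<dots> = (\<Sum>m\<in>UNIV. \<Sum>k\<in>UNIV. a$k * Mtens \<rho> \<phi> m $ l $ k * b$m)"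
      by (rule sum.swap)
    also have "\<dots> = (\<Sum>k\<in>UNIV. b$k * (\<Sum>m\<in>UNIV. Mtens \<rho> \<phi> k $ l $ m * a$m))"
      by (simp add: sum_distrib_left mult_ac)
    finally show ?thesis .
  qed
  then show ?thesis by (simp add: vec_eq_iff Pm_mult_comp)
qed

lemma inv_right: "invertible A \<Longrightarrow> A ** matrix_inv A = mat 1"
  unfolding invertible_def matrix_inv_def by (rule someI2_ex) auto

lemma inv_left: "invertible A \<Longrightarrow> matrix_inv A ** A = mat 1"
  unfolding invertible_def matrix_inv_def by (rule someI2_ex) auto

lemma inv_right_v: "invertible A \<Longrightarrow> A *v (matrix_inv A *v y) = y"
  by (simp add: matrix_vector_mul_assoc inv_right)

lemma inv_left_v: "invertible A \<Longrightarrow> matrix_inv A *v (A *v y) = y"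
  by (simp add: matrix_vector_mul_assoc inv_left)

lemma pos_def_invertible: fixes A :: "real^'k::finite^'k" shows "pos_def A \<Longrightarrow> invertible A"
  unfolding invertible_left_inverse matrix_left_invertible_ker pos_def_def
  by (metis inner_zero_right less_irrefl)

lemma texp_cont: assumes "texp f c0 c1 c2" "e > 0" shows "eventually (\<lambda>t. norm (f t - c0) < e) (nhds 0)"
proof -
  have "continuous (at 0) f" by (rule has_vector_derivative_continuous[OF texp_deriv[OF assms(1)]])
  then have "(f \<longlongrightarrow> f 0) (at 0)" by (simp add: isCont_def)
  from tendstoD[OF this assms(2)] have "eventually (\<lambda>t. norm (f t - c0) < e) (at 0)"
    using texp_at0[OF assms(1)] by (simp add: dist_norm)
  then show ?thesis unfolding eventually_nhds_conv_at using assms texp_at0[OF assms(1)] by simp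
qed

lemma Pm_lower:
  fixes h :: "real \<Rightarrow> real^'k::finite"
  assumes inv: "invertible (Pm M h0)" and H: "texp h h0 h1 h2"
  shows "\<exists>L. eventually (\<lambda>t. \<forall>w. norm w \<le> L * norm (Pm M (h t) *v w)) (nhds 0)"
proof -
  interpret B: bounded_bilinear "\<lambda>a b. Pm M a *v (b::real^'k)" by (rule Pm_bilinear)
  obtain K where K: "\<And>a b. norm (Pm M a *v b) \<le> norm a * norm b * K" "K > 0"
    using B.pos_bounded by blast
  define A where "A = matrix_inv (Pm M h0)"
  obtain KA where KA: "\<And>x. norm (A *v x) \<le> KA * norm x"
    using linear_bounded[OF matrix_vector_mul_linear[of A]] by blast
  define KA' where "KA' = \<bar>KA\<bar> + 1"
  have KA': "KA' > 0" "\<And>x. norm (A *v x) \<le> KA' * norm x"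
  proof -
    show "KA' > 0" unfolding KA'_def by simp
    fix x :: "real^'k"
    have "KA * norm x \<le> KA' * norm x" unfolding KA'_def by (intro mult_right_mono) auto
    then show "norm (A *v x) \<le> KA' * norm x" using KA[of x] by linarith
  qed
  have "eventually (\<lambda>t. norm (h t - h0) < 1 / (2 * K * KA')) (nhds 0)"
    by (rule texp_cont[OF H]) (use K KA' in simp)
  then have "eventually (\<lambda>t. \<forall>w. norm w \<le> (2 * KA') * norm (Pm M (h t) *v w)) (nhds 0)"
  proof eventually_elim
    case (elim t)
    show ?case
    proof
      fix w :: "real^'k"
      have "w = A *v (Pm M h0 *v w)" unfolding A_def by (simp add: inv_left_v inv)
      also have "Pm M h0 *v w = Pm M (h t) *v w - Pm M (h t - h0) *v w" by (simp add: B.diff_left)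
      finally have "norm w \<le> KA' * norm (Pm M (h t) *v w - Pm M (h t - h0) *v w)"
        by (metis KA'(2))
      also have "\<dots> \<le> KA' * (norm (Pm M (h t) *v w) + norm (h t - h0) * norm w * K)"
        using KA'(1) K(1)[of "h t - h0" w] by (intro mult_left_mono order_trans[OF norm_triangle_ineq4]) auto
      also have "\<dots> \<le> KA' * (norm (Pm M (h t) *v w) + (1 / (2 * K * KA')) * norm w * K)"
        using KA'(1) K(2) elim by (intro mult_left_mono add_left_mono mult_right_mono) auto
      also have "\<dots> = KA' * norm (Pm M (h t) *v w) + norm w / 2"
        using KA'(1) K(2) by (simp add: field_simps)
      finally show "norm w \<le> (2 * KA') * norm (Pm M (h t) *v w)" by simp
    qed
  qed
  then show ?thesis by blast
qed


lemma bnd_le: "bnd g \<Longrightarrow> eventually (\<lambda>t. norm (f t) \<le> norm (g t)) (nhds 0) \<Longrightarrow> bnd f"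
  unfolding bnd_def
proof (elim exE)
  fix M assume "eventually (\<lambda>t. norm (g t) \<le> M) (nhds 0)" "eventually (\<lambda>t. norm (f t) \<le> norm (g t)) (nhds 0)"
  then have "eventually (\<lambda>t. norm (f t) \<le> M) (nhds 0)" by eventually_elim simp
  then show "\<exists>M. eventually (\<lambda>t. norm (f t) \<le> M) (nhds 0)" by blast
qed

lemma texp_solve:
  fixes h q :: "real \<Rightarrow> real^'k::finite"
  assumes H: "texp h h0 h1 h2" and Q: "texp q q0 q1 q2"
    and inv: "eventually (\<lambda>t. invertible (Pm M (h t))) (nhds 0)"
  obtains u0 u1 u2 where "texp (\<lambda>t. Pinv M (h t) *v q t) u0 u1 u2"
    "Pm M h0 *v u0 = q0" "Pm M h0 *v u1 + Pm M h1 *v u0 = q1"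
proof -
  interpret B: bounded_bilinear "\<lambda>a b. Pm M a *v (b::real^'k)" by (rule Pm_bilinear)
  have inv0: "invertible (Pm M h0)" using eventually_nhds_x_imp_x[OF inv] texp_at0[OF H] by simp
  define A where "A = matrix_inv (Pm M h0)"
  define u0 where "u0 = A *v q0"
  define u1 where "u1 = A *v (q1 - Pm M h1 *v u0)"
  define u2 where "u2 = A *v (q2 - Pm M h1 *v u1 - Pm M h2 *v u0)"
  have e0: "Pm M h0 *v u0 = q0" and e1: "Pm M h0 *v u1 + Pm M h1 *v u0 = q1"
    and e2: "Pm M h0 *v u2 + Pm M h1 *v u1 + Pm M h2 *v u0 = q2"
    unfolding u2_def u1_def u0_def A_def by (simp_all add: inv_right_v[OF inv0])
  define pu where "pu t = u0 + t *\<^sub>R u1 + (t^2) *\<^sub>R u2" for t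
  have "texp (\<lambda>t. Pm M (h t) *v pu t) q0 q1 q2"
    using texp_bilinear[OF Pm_bilinear[of M] H texp_poly[of u0 u1 u2]] unfolding e0 e1 e2 pu_def .
  then obtain S where S: "bnd S" "eventually (\<lambda>t. Pm M (h t) *v pu t = q0 + t *\<^sub>R q1 + (t^2) *\<^sub>R q2 + (t^3) *\<^sub>R S t) (nhds 0)"
    unfolding texp_def by blast
  obtain Rq where Rq: "bnd Rq" "eventually (\<lambda>t. q t = q0 + t *\<^sub>R q1 + (t^2) *\<^sub>R q2 + (t^3) *\<^sub>R Rq t) (nhds 0)"
    using Q unfolding texp_def by blast
  obtain L where L: "eventually (\<lambda>t. \<forall>w. norm w \<le> L * norm (Pm M (h t) *v w)) (nhds 0)"
    using Pm_lower[OF inv0 H] by blast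
  define u where "u t = Pinv M (h t) *v q t" for t
  define Ru where "Ru t = (1 / t^3) *\<^sub>R (u t - pu t)" for t
  have u0': "u 0 = u0" unfolding u_def u0_def A_def Pinv_def using texp_at0[OF H] texp_at0[OF Q] by simp
  have key: "eventually (\<lambda>t. norm (Ru t) \<le> norm (L *\<^sub>R (Rq t - S t))) (nhds 0)"
    using S(2) Rq(2) L inv
  proof eventually_elim
    case (elim t)
    show ?case
    proof (cases "t = 0")
      case True then show ?thesis by (simp add: Ru_def)
    next
      case False
      have "Pm M (h t) *v u t = q t" unfolding u_def Pinv_def using elim(4) by (simp add: inv_right_v)
      then have "Pm M (h t) *v (u t - pu t) = (t^3) *\<^sub>R (Rq t - S t)"
        using elim(1,2) by (simp add: B.diff_right algebra_simps)
      then have nb: "norm (u t - pu t) \<le> L * (\<bar>t\<bar>^3 * norm (Rq t - S t))"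
        using elim(3) by (metis norm_scaleR power_abs)
      have nR: "norm (Ru t) = norm (u t - pu t) / \<bar>t\<bar>^3"
        unfolding Ru_def by (simp add: power_abs divide_inverse mult.commute)
      have tp: "\<bar>t\<bar>^3 > 0" using False by simp
      have "norm (Ru t) \<le> L * (\<bar>t\<bar>^3 * norm (Rq t - S t)) / \<bar>t\<bar>^3"
        unfolding nR by (rule divide_right_mono[OF nb]) simp
      also have "\<dots> = L * norm (Rq t - S t)" using tp by simp
      finally have "norm (Ru t) \<le> L * norm (Rq t - S t)" .
      also have "\<dots> \<le> norm (L *\<^sub>R (Rq t - S t))" by (simp add: mult_right_mono)
      finally show ?thesis .
    qed
  qed
  have "bnd (\<lambda>t. L *\<^sub>R (Rq t + (-1) *\<^sub>R S t))" by (intro bnd_scale bnd_add Rq(1) S(1))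
  then have "bnd (\<lambda>t. L *\<^sub>R (Rq t - S t))" by simp
  then have bRu: "bnd Ru" using key by (rule bnd_le)
  have "eventually (\<lambda>t. u t = u0 + t *\<^sub>R u1 + (t^2) *\<^sub>R u2 + (t^3) *\<^sub>R Ru t) (nhds 0)"
  proof (rule always_eventually, intro allI)
    fix t show "u t = u0 + t *\<^sub>R u1 + (t^2) *\<^sub>R u2 + (t^3) *\<^sub>R Ru t"
      by (cases "t = 0") (simp_all add: u0' Ru_def pu_def)
  qed
  then have "texp u u0 u1 u2" unfolding texp_def using bRu by blast
  then show ?thesis using that e0 e1 unfolding u_def by blast
qed




lemma texp_from_bound:
  assumes "a > 0" "\<And>t. \<bar>t\<bar> < a \<Longrightarrow> norm (f t - (c0 + t *\<^sub>R c1 + (t^2) *\<^sub>R c2)) \<le> C * \<bar>t\<bar>^3"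
  shows "texp f c0 c1 c2"
proof -
  define R where "R t = (1 / t^3) *\<^sub>R (f t - (c0 + t *\<^sub>R c1 + (t^2) *\<^sub>R c2))" for t
  have ev: "eventually (\<lambda>t. \<bar>t\<bar> < a) (nhds 0)" by (rule eventually_abs_lt) fact
  have "eventually (\<lambda>t. norm (R t) \<le> \<bar>C\<bar>) (nhds 0)"
    using ev
  proof eventually_elim
    case (elim t)
    show ?case
    proof (cases "t = 0")
      case True then show ?thesis by (simp add: R_def)
    next
      case False
      have tp: "\<bar>t\<bar>^3 > 0" using False by simp
      have "norm (R t) = norm (f t - (c0 + t *\<^sub>R c1 + (t^2) *\<^sub>R c2)) / \<bar>t\<bar>^3"
        unfolding R_def by (simp add: power_abs divide_inverse mult.commute)
      also have "\<dots> \<le> C * \<bar>t\<bar>^3 / \<bar>t\<bar>^3" by (rule divide_right_mono[OF assms(2)[OF elim]]) simp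
      also have "\<dots> = C" using tp by simp
      finally show ?thesis by simp
    qed
  qed
  then have "bnd R" unfolding bnd_def by blast
  moreover have "eventually (\<lambda>t. f t = c0 + t *\<^sub>R c1 + (t^2) *\<^sub>R c2 + (t^3) *\<^sub>R R t) (nhds 0)"
    using ev
  proof eventually_elim
    case (elim t)
    show ?case
    proof (cases "t = 0")
      case True
      then show ?thesis using assms(2)[of 0] assms(1) by simp
    next
      case False then show ?thesis by (simp add: R_def)
    qed
  qed
  ultimately show ?thesis unfolding texp_def by blast
qed

lemma line_deriv:
  fixes G :: "'a::real_normed_vector \<Rightarrow> 'b::real_normed_vector"
  assumes "G differentiable_on D" "open D" "p + t *\<^sub>R e \<in> D"
  shows "((\<lambda>s. G (p + s *\<^sub>R e)) has_vector_derivative frechet_derivative G (at (p + t *\<^sub>R e)) e) (at t)"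
proof -
  define G' where "G' = frechet_derivative G (at (p + t *\<^sub>R e))"
  have "G differentiable at (p + t *\<^sub>R e)" using assms differentiable_on_eq_differentiable_at by blast
  then have dG: "(G has_derivative G') (at (p + t *\<^sub>R e))" unfolding G'_def by (simp add: frechet_derivative_works[symmetric])
  have dl: "((\<lambda>s. p + s *\<^sub>R e) has_derivative (\<lambda>s. s *\<^sub>R e)) (at t)"
    by (auto intro!: derivative_eq_intros)
  have "((G \<circ> (\<lambda>s. p + s *\<^sub>R e)) has_derivative (G' \<circ> (\<lambda>s. s *\<^sub>R e))) (at t)"
    by (rule diff_chain_at[OF dl dG])
  moreover have "G' \<circ> (\<lambda>s. s *\<^sub>R e) = (\<lambda>s. s *\<^sub>R G' e)"
    by (auto simp: fun_eq_iff linear_cmul[OF has_derivative_linear[OF dG]])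
  ultimately show ?thesis unfolding has_vector_derivative_def G'_def by (simp add: o_def)
qed

lemma smooth_line:
  fixes f :: "'a::real_normed_vector \<Rightarrow> real^'k::finite"
  assumes sm: "smooth_on D f" and D: "open D" and p: "p \<in> D"
  shows "\<exists>c1 c2. texp (\<lambda>t. f (p + t *\<^sub>R e)) (f p) c1 c2"
proof -
  define f1 where "f1 q = frechet_derivative f (at q) e" for q
  define f2 where "f2 q = frechet_derivative f1 (at q) e" for q
  define f3 where "f3 q = frechet_derivative f2 (at q) e" for q
  have "Ck_on 3 D f" using sm unfolding smooth_on_def by blast
  then have d0: "f differentiable_on D" and d1: "f1 differentiable_on D" and d2: "f2 differentiable_on D"
    and c3: "continuous_on D f3"
    unfolding f1_def f2_def f3_def by (simp_all add: numeral_3_eq_3)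
  obtain r where r: "r > 0" "ball p r \<subseteq> D" using D p open_contains_ball by blast
  define a where "a = r / 2 / (norm e + 1)"
  have ne: "norm e + 1 > 0" by (simp add: add_nonneg_pos)
  have a: "a > 0" unfolding a_def using r ne by simp
  have inD: "p + s *\<^sub>R e \<in> D" if "\<bar>s\<bar> \<le> a" for s
  proof -
    have "\<bar>s\<bar> * norm e \<le> a * (norm e + 1)" using that a by (intro mult_mono) auto
    also have "\<dots> = r / 2"
    proof -
      have gen: "\<And>x y::real. x > 0 \<Longrightarrow> y / x * x = y" by simp
      show ?thesis unfolding a_def by (rule gen[OF ne])
    qed
    also have "\<dots> < r" using r by simp
    finally have "dist p (p + s *\<^sub>R e) < r" by (simp add: dist_norm)
    then show ?thesis using r by auto
  qed
  have "continuous_on {-a..a} (\<lambda>s. f3 (p + s *\<^sub>R e))"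
    by (rule continuous_on_compose2[OF c3]) (auto intro!: continuous_intros inD)
  then have "bounded ((\<lambda>s. f3 (p + s *\<^sub>R e)) ` {-a..a})"
    by (intro compact_imp_bounded compact_continuous_image) auto
  then obtain Bd where Bd: "\<And>s. s \<in> {-a..a} \<Longrightarrow> norm (f3 (p + s *\<^sub>R e)) \<le> Bd"
    unfolding bounded_iff by blast
  define g where "g = [f, f1, f2, f3]"
  have gd: "\<And>m. m < 3 \<Longrightarrow> (g ! m) differentiable_on D" "\<And>m. m < 3 \<Longrightarrow> g ! Suc m = (\<lambda>q. frechet_derivative (g ! m) (at q) e)"
    using d0 d1 d2 unfolding g_def f1_def f2_def f3_def
    by (auto simp: less_Suc_eq numeral_3_eq_3 fun_eq_iff)
  have comp: "\<bar>(f (p + t *\<^sub>R e) - (f p + t *\<^sub>R f1 p + (t^2) *\<^sub>R ((1/2) *\<^sub>R f2 p))) $ k\<bar> \<le> Bd / 6 * \<bar>t\<bar>^3"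
    if t: "\<bar>t\<bar> < a" "t \<noteq> 0" for t k
  proof -
    define diff where "diff m s = (g ! m) (p + s *\<^sub>R e) $ k" for m s
    have DER: "\<forall>m s. m < 3 \<and> -a \<le> s \<and> s \<le> a \<longrightarrow> DERIV (diff m) s :> diff (Suc m) s"
    proof (intro allI impI)
      fix m :: nat and s :: real assume ms: "m < 3 \<and> -a \<le> s \<and> s \<le> a"
      have "((\<lambda>s. (g ! m) (p + s *\<^sub>R e)) has_vector_derivative (g ! Suc m) (p + s *\<^sub>R e)) (at s)"
        using line_deriv[OF gd(1) D inD, of m s] ms gd(2)[of m] by auto
      from bounded_linear.has_vector_derivative[OF bounded_linear_vec_nth this, of k]
      show "DERIV (diff m) s :> diff (Suc m) s"
        unfolding diff_def has_real_derivative_iff_has_vector_derivative by simp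
    qed
    have "\<exists>\<xi>. (if t < 0 then t < \<xi> \<and> \<xi> < 0 else 0 < \<xi> \<and> \<xi> < t) \<and>
      diff 0 t = (\<Sum>m<3. (diff m 0 / fact m) * (t - 0)^m) + (diff 3 \<xi> / fact 3) * (t - 0)^3"
      by (rule Taylor[of 3 diff "diff 0" "-a" a 0 t, OF _ refl DER]) (use t a in auto)
    then obtain \<xi> where xi: "(if t < 0 then t < \<xi> \<and> \<xi> < 0 else 0 < \<xi> \<and> \<xi> < t)"
      "diff 0 t = (\<Sum>m<3. (diff m 0 / fact m) * (t - 0)^m) + (diff 3 \<xi> / fact 3) * (t - 0)^3"
      by blast
    have xia: "\<xi> \<in> {-a..a}" using xi(1) t by (auto split: if_splits)
    have "(f (p + t *\<^sub>R e) - (f p + t *\<^sub>R f1 p + (t^2) *\<^sub>R ((1/2) *\<^sub>R f2 p))) $ k = diff 3 \<xi> / 6 * t^3"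
      using xi(2) unfolding diff_def g_def
      by (simp add: numeral_3_eq_3 lessThan_Suc algebra_simps fact_numeral power2_eq_square)
    also have "\<bar>\<dots>\<bar> \<le> Bd / 6 * \<bar>t\<bar>^3"
    proof -
      have "\<bar>diff 3 \<xi>\<bar> \<le> Bd" unfolding diff_def g_def
        using order_trans[OF component_le_norm_cart Bd[OF xia]] by simp
      then show ?thesis by (simp add: abs_mult power_abs divide_right_mono mult_right_mono)
    qed
    finally show ?thesis .
  qed
  have "norm (f (p + t *\<^sub>R e) - (f p + t *\<^sub>R f1 p + (t^2) *\<^sub>R ((1/2) *\<^sub>R f2 p))) \<le> (CARD('k) * (Bd / 6)) * \<bar>t\<bar>^3"
    if "\<bar>t\<bar> < a" for t
  proof (cases "t = 0")
    case True then show ?thesis by simp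
  next
    case False
    have "norm (f (p + t *\<^sub>R e) - (f p + t *\<^sub>R f1 p + (t^2) *\<^sub>R ((1/2) *\<^sub>R f2 p)))
        \<le> (\<Sum>k\<in>UNIV. \<bar>(f (p + t *\<^sub>R e) - (f p + t *\<^sub>R f1 p + (t^2) *\<^sub>R ((1/2) *\<^sub>R f2 p))) $ k\<bar>)"
      by (rule norm_le_l1_cart)
    also have "\<dots> \<le> (\<Sum>k\<in>(UNIV::'k set). Bd / 6 * \<bar>t\<bar>^3)"
      by (rule sum_mono) (rule comp[OF that False])
    finally show ?thesis by simp
  qed
  then have "texp (\<lambda>t. f (p + t *\<^sub>R e)) (f p) (f1 p) ((1/2) *\<^sub>R f2 p)"
    by (rule texp_from_bound[OF a])
  then show ?thesis by blast
qed




lemma texp_coef: "texp f a0 a1 a2 \<Longrightarrow> a0 = b0 \<Longrightarrow> a1 = b1 \<Longrightarrow> a2 = b2 \<Longrightarrow> texp f b0 b1 b2"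
  by simp

lemma texp_fun: "texp f a0 a1 a2 \<Longrightarrow> (\<And>t. f t = g t) \<Longrightarrow> texp g a0 a1 a2"
proof -
  assume "texp f a0 a1 a2" "\<And>t. f t = g t"
  then have "f = g" by auto
  with \<open>texp f a0 a1 a2\<close> show ?thesis by simp
qed

lemma texp_avg: assumes "texp f a0 a1 a2" shows "texp (\<lambda>t. avg (f 0) (f t)) a0 ((1/2) *\<^sub>R a1) ((1/2) *\<^sub>R a2)"
proof -
  have "texp (\<lambda>t. (1/2) *\<^sub>R (f 0 + f t)) ((1/2) *\<^sub>R (f 0 + a0)) ((1/2) *\<^sub>R (0 + a1)) ((1/2) *\<^sub>R (0 + a2))"
    by (intro texp_scale texp_add texp_const assms)
  then show ?thesis unfolding avg_def texp_at0[OF assms] by (simp add: scaleR_add_right[symmetric])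
qed

lemma texp_sub0: assumes "texp f a0 a1 a2" shows "texp (\<lambda>t. f t - f 0) 0 a1 a2"
proof -
  have "texp (\<lambda>t. f t + (- f 0)) (a0 + (- f 0)) (a1 + 0) (a2 + 0)"
    by (intro texp_add texp_const assms)
  then show ?thesis using texp_at0[OF assms] by simp
qed

lemma FEC_sym: "FEC g M a b = FEC g M b a"
  unfolding FEC_def avg_def Let_def by (simp add: add.commute)

lemma GEC_sym: "GEC g M a b = GEC g M b a"
  unfolding GEC_def avg_def Let_def by (simp add: add.commute)

lemma avg_sym: "avg a b = avg b a"
  unfolding avg_def by (simp add: add.commute)


lemma central_final:
  assumes "texp ch c0 c1 c2" "2 *\<^sub>R c1 = Z" "\<And>t. t > 0 \<Longrightarrow> E t = Z - (1/t) *\<^sub>R (ch t - ch (-t))"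
  shows "\<exists>C d. d > 0 \<and> (\<forall>t. 0 < t \<and> t < d \<longrightarrow> norm (E t) \<le> C * t^2)"
proof -
  obtain C d where "d > 0" "\<forall>t. 0 < t \<and> t < d \<longrightarrow> norm ((1/t) *\<^sub>R (ch t - ch (-t)) - 2 *\<^sub>R c1) \<le> C * t^2"
    using texp_central[OF assms(1)] by blast
  moreover have "norm (E t) = norm ((1/t) *\<^sub>R (ch t - ch (-t)) - 2 *\<^sub>R c1)" if "t > 0" for t
    using assms(3)[OF that] assms(2) by (simp add: norm_minus_commute)
  ultimately show ?thesis by auto
qed

lemma dir_x:
  fixes h qx qy b :: "real \<Rightarrow> real^'k::finite" and g :: real
    and \<rho> :: "real^'d::finite \<Rightarrow> real" and \<phi> :: "'k \<Rightarrow> real^'d \<Rightarrow> real"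
  defines "M \<equiv> Mtens \<rho> \<phi>"
  assumes H: "texp h h0 h1 h2" and QX: "texp qx qx0 qx1 qx2" and QY: "texp qy qy0 qy1 qy2"
    and BB: "texp b b0 b1 b2"
    and inv: "eventually (\<lambda>t. invertible (Pm M (h t))) (nhds 0)"
  shows "\<exists>\<Phi> \<beta>. ((\<lambda>s. Fhat g M (h s, qx s, qy s)) has_vector_derivative \<Phi>) (at 0) \<and> (b has_vector_derivative \<beta>) (at 0) \<and>
    (\<exists>C d. d > 0 \<and> (\<forall>t. 0 < t \<and> t < d \<longrightarrow> norm (
       - (1/t) *\<^sub>R (FEC g M (h 0, qx 0, qy 0) (h t, qx t, qy t) - FEC g M (h (-t), qx (-t), qy (-t)) (h 0, qx 0, qy 0))
       + (0, - (g / (2 * t)) *\<^sub>R (Pm M (avg (h 0) (h t)) *v (b t - b 0) + Pm M (avg (h (-t)) (h 0)) *v (b 0 - b (-t))), 0)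
       - (- \<Phi> + (0, - g *\<^sub>R (Pm M (h 0) *v \<beta>), 0))) \<le> C * t^2))"
proof -
  have PB: "bounded_bilinear (\<lambda>a b. Pm M a *v (b::real^'k))" by (rule Pm_bilinear)
  interpret B: bounded_bilinear "\<lambda>a b. Pm M a *v (b::real^'k)" by (rule PB)
  have sym: "\<And>a b. Pm M a *v b = Pm M b *v a" unfolding M_def by (rule Pm_sym)
  obtain u0 u1 u2 where U: "texp (\<lambda>t. Pinv M (h t) *v qx t) u0 u1 u2"
    and eu0: "Pm M h0 *v u0 = qx0" and eu1: "Pm M h0 *v u1 + Pm M h1 *v u0 = qx1"
    by (rule texp_solve[OF H QX inv])
  obtain v0 v1 v2 where V: "texp (\<lambda>t. Pinv M (h t) *v qy t) v0 v1 v2"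
    and ev0: "Pm M h0 *v v0 = qy0" and ev1: "Pm M h0 *v v1 + Pm M h1 *v v0 = qy1"
    by (rule texp_solve[OF H QY inv])
  define \<Phi> where "\<Phi> = (qx1, (Pm M qx0 *v u1 + Pm M qx1 *v u0) + (g/2) *\<^sub>R (Pm M h0 *v h1 + Pm M h1 *v h0),
      Pm M qx0 *v v1 + Pm M qx1 *v v0)"
  note TF = texp_Pair[OF QX texp_Pair[OF texp_add[OF texp_bilinear[OF PB QX U] texp_scale[OF texp_bilinear[OF PB H H], of "g/2"]] texp_bilinear[OF PB QX V]]]
  have eqF: "(\<lambda>s. Fhat g M (h s, qx s, qy s)) = (\<lambda>t. (qx t, Pm M (qx t) *v (Pinv M (h t) *v qx t) + (g/2) *\<^sub>R (Pm M (h t) *v h t), Pm M (qx t) *v (Pinv M (h t) *v qy t)))"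
    by (simp add: Fhat_def fun_eq_iff)
  have dF: "((\<lambda>s. Fhat g M (h s, qx s, qy s)) has_vector_derivative \<Phi>) (at 0)"
    unfolding eqF \<Phi>_def by (rule texp_deriv[OF TF])
  have dB: "(b has_vector_derivative b1) (at 0)" by (rule texp_deriv[OF BB])
  have symr: "\<And>x y z. Pm M (Pm M x *v y) *v z = Pm M z *v (Pm M x *v y)" by (rule sym)
  note HA = texp_avg[OF H]
  note UA = texp_avg[OF U]
  note VA = texp_avg[OF V]
  note PHH = texp_avg[OF texp_bilinear[OF PB H H]]
  note S1 = texp_bilinear[OF PB HA UA]
  note S2 = texp_add[OF texp_scale[OF PHH, of "g/2"] texp_bilinear[OF PB UA S1]]
  note S3 = texp_bilinear[OF PB VA S1]
  note SIG = texp_bilinear[OF PB HA texp_sub0[OF BB]]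
  note CHI = texp_add[OF texp_Pair[OF S1 texp_Pair[OF S2 S3]] texp_Pair[OF texp_const[of 0] texp_Pair[OF texp_scale[OF SIG, of "g/2"] texp_const[of 0]]]]
  have "\<exists>C d. d > 0 \<and> (\<forall>t. 0 < t \<and> t < d \<longrightarrow> norm (
       - (1/t) *\<^sub>R (FEC g M (h 0, qx 0, qy 0) (h t, qx t, qy t) - FEC g M (h (-t), qx (-t), qy (-t)) (h 0, qx 0, qy 0))
       + (0, - (g / (2 * t)) *\<^sub>R (Pm M (avg (h 0) (h t)) *v (b t - b 0) + Pm M (avg (h (-t)) (h 0)) *v (b 0 - b (-t))), 0)
       - (- \<Phi> + (0, - g *\<^sub>R (Pm M (h 0) *v b1), 0))) \<le> C * t^2)"
    apply (rule central_final[OF CHI, where Z = "- (- \<Phi> + (0, - g *\<^sub>R (Pm M (h 0) *v b1), 0))"])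
    subgoal
      unfolding \<Phi>_def texp_at0[OF H] eu0[symmetric] eu1[symmetric]
      by (simp add: B.add_left B.add_right B.scaleR_left B.scaleR_right B.zero_right algebra_simps symr)
    subgoal for t
      by (simp add: FEC_def Let_def vel_u_def vel_v_def depth_def avg_sym prod_eq_iff algebra_simps)
    done
  then show ?thesis using dF dB by blast
qed

lemma dir_y:
  fixes h qx qy b :: "real \<Rightarrow> real^'k::finite" and g :: real
    and \<rho> :: "real^'d::finite \<Rightarrow> real" and \<phi> :: "'k \<Rightarrow> real^'d \<Rightarrow> real"
  defines "M \<equiv> Mtens \<rho> \<phi>"
  assumes H: "texp h h0 h1 h2" and QX: "texp qx qx0 qx1 qx2" and QY: "texp qy qy0 qy1 qy2"
    and BB: "texp b b0 b1 b2"
    and inv: "eventually (\<lambda>t. invertible (Pm M (h t))) (nhds 0)"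
  shows "\<exists>\<Phi> \<beta>. ((\<lambda>s. Ghat g M (h s, qx s, qy s)) has_vector_derivative \<Phi>) (at 0) \<and> (b has_vector_derivative \<beta>) (at 0) \<and>
    (\<exists>C d. d > 0 \<and> (\<forall>t. 0 < t \<and> t < d \<longrightarrow> norm (
       - (1/t) *\<^sub>R (GEC g M (h 0, qx 0, qy 0) (h t, qx t, qy t) - GEC g M (h (-t), qx (-t), qy (-t)) (h 0, qx 0, qy 0))
       + (0, 0, - (g / (2 * t)) *\<^sub>R (Pm M (avg (h 0) (h t)) *v (b t - b 0) + Pm M (avg (h (-t)) (h 0)) *v (b 0 - b (-t))))
       - (- \<Phi> + (0, 0, - g *\<^sub>R (Pm M (h 0) *v \<beta>)))) \<le> C * t^2))"
proof -
  have PB: "bounded_bilinear (\<lambda>a b. Pm M a *v (b::real^'k))" by (rule Pm_bilinear)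
  interpret B: bounded_bilinear "\<lambda>a b. Pm M a *v (b::real^'k)" by (rule PB)
  have sym: "\<And>a b. Pm M a *v b = Pm M b *v a" unfolding M_def by (rule Pm_sym)
  obtain u0 u1 u2 where U: "texp (\<lambda>t. Pinv M (h t) *v qx t) u0 u1 u2"
    and eu0: "Pm M h0 *v u0 = qx0" and eu1: "Pm M h0 *v u1 + Pm M h1 *v u0 = qx1"
    by (rule texp_solve[OF H QX inv])
  obtain v0 v1 v2 where V: "texp (\<lambda>t. Pinv M (h t) *v qy t) v0 v1 v2"
    and ev0: "Pm M h0 *v v0 = qy0" and ev1: "Pm M h0 *v v1 + Pm M h1 *v v0 = qy1"
    by (rule texp_solve[OF H QY inv])
  define \<Phi> where "\<Phi> = (qy1, Pm M qy0 *v u1 + Pm M qy1 *v u0,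
      (Pm M qy0 *v v1 + Pm M qy1 *v v0) + (g/2) *\<^sub>R (Pm M h0 *v h1 + Pm M h1 *v h0))"
  note TF = texp_Pair[OF QY texp_Pair[OF texp_bilinear[OF PB QY U] texp_add[OF texp_bilinear[OF PB QY V] texp_scale[OF texp_bilinear[OF PB H H], of "g/2"]]]]
  have eqF: "(\<lambda>s. Ghat g M (h s, qx s, qy s)) = (\<lambda>t. (qy t, Pm M (qy t) *v (Pinv M (h t) *v qx t), Pm M (qy t) *v (Pinv M (h t) *v qy t) + (g/2) *\<^sub>R (Pm M (h t) *v h t)))"
    by (simp add: Ghat_def fun_eq_iff)
  have dF: "((\<lambda>s. Ghat g M (h s, qx s, qy s)) has_vector_derivative \<Phi>) (at 0)"
    unfolding eqF \<Phi>_def by (rule texp_deriv[OF TF])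
  have dB: "(b has_vector_derivative b1) (at 0)" by (rule texp_deriv[OF BB])
  have symr: "\<And>x y z. Pm M (Pm M x *v y) *v z = Pm M z *v (Pm M x *v y)" by (rule sym)
  note HA = texp_avg[OF H]
  note UA = texp_avg[OF U]
  note VA = texp_avg[OF V]
  note PHH = texp_avg[OF texp_bilinear[OF PB H H]]
  note S1 = texp_bilinear[OF PB HA VA]
  note S2 = texp_bilinear[OF PB UA S1]
  note S3 = texp_add[OF texp_scale[OF PHH, of "g/2"] texp_bilinear[OF PB VA S1]]
  note SIG = texp_bilinear[OF PB HA texp_sub0[OF BB]]
  note CHI = texp_add[OF texp_Pair[OF S1 texp_Pair[OF S2 S3]] texp_Pair[OF texp_const[of 0] texp_Pair[OF texp_const[of 0] texp_scale[OF SIG, of "g/2"]]]]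
  have "\<exists>C d. d > 0 \<and> (\<forall>t. 0 < t \<and> t < d \<longrightarrow> norm (
       - (1/t) *\<^sub>R (GEC g M (h 0, qx 0, qy 0) (h t, qx t, qy t) - GEC g M (h (-t), qx (-t), qy (-t)) (h 0, qx 0, qy 0))
       + (0, 0, - (g / (2 * t)) *\<^sub>R (Pm M (avg (h 0) (h t)) *v (b t - b 0) + Pm M (avg (h (-t)) (h 0)) *v (b 0 - b (-t))))
       - (- \<Phi> + (0, 0, - g *\<^sub>R (Pm M (h 0) *v b1)))) \<le> C * t^2)"
    apply (rule central_final[OF CHI, where Z = "- (- \<Phi> + (0, 0, - g *\<^sub>R (Pm M (h 0) *v b1)))"])
    subgoal
      unfolding \<Phi>_def texp_at0[OF H] ev0[symmetric] ev1[symmetric]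
      by (simp add: B.add_left B.add_right B.scaleR_left B.scaleR_right B.zero_right algebra_simps symr)
    subgoal for t
      by (simp add: GEC_def Let_def vel_u_def vel_v_def depth_def avg_sym prod_eq_iff algebra_simps)
    done
  then show ?thesis using dF dB by blast
qed




lemma vd_shift:
  assumes "((\<lambda>t. f (a + t)) has_vector_derivative D) (at 0)"
  shows "vector_derivative f (at a) = D"
proof -
  have d1: "((\<lambda>s. s - a) has_vector_derivative 1) (at a)"
    by (auto intro!: derivative_eq_intros)
  have "(((\<lambda>t. f (a + t)) \<circ> (\<lambda>s. s - a)) has_vector_derivative (1 *\<^sub>R D)) (at a)"
    by (rule vector_diff_chain_at[OF d1]) (simp add: assms)
  moreover have "(\<lambda>t. f (a + t)) \<circ> (\<lambda>s. s - a) = f" by (simp add: o_def)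
  ultimately show ?thesis by (simp add: vector_derivative_at)
qed

lemma line_texp_x:
  fixes f :: "real \<times> real \<Rightarrow> real^'k::finite"
  assumes "smooth_on D f" "open D" "(x0, y0) \<in> D"
  shows "\<exists>c1 c2. texp (\<lambda>t. f (x0 + t, y0)) (f (x0 + 0, y0)) c1 c2"
proof -
  obtain c1 c2 where "texp (\<lambda>t. f ((x0, y0) + t *\<^sub>R (1, 0))) (f (x0, y0)) c1 c2"
    using smooth_line[OF assms] by blast
  then have "texp (\<lambda>t. f (x0 + t, y0)) (f (x0, y0)) c1 c2" by (rule texp_fun) simp
  then show ?thesis by auto
qed

lemma line_texp_y:
  fixes f :: "real \<times> real \<Rightarrow> real^'k::finite"
  assumes "smooth_on D f" "open D" "(x0, y0) \<in> D"
  shows "\<exists>c1 c2. texp (\<lambda>t. f (x0, y0 + t)) (f (x0, y0 + 0)) c1 c2"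
proof -
  obtain c1 c2 where "texp (\<lambda>t. f ((x0, y0) + t *\<^sub>R (0, 1))) (f (x0, y0)) c1 c2"
    using smooth_line[OF assms] by blast
  then have "texp (\<lambda>t. f (x0, y0 + t)) (f (x0, y0)) c1 c2" by (rule texp_fun) simp
  then show ?thesis by auto
qed

theorem lemma4p2:
  fixes \<rho> :: "real^'d::finite \<Rightarrow> real"
    and \<phi> :: "'k::finite \<Rightarrow> real^'d \<Rightarrow> real"
    and k1 :: 'k
    and g :: real
    and D :: "(real \<times> real) set"
    and h qx qy B :: "real \<times> real \<Rightarrow> real^'k"
    and x0 y0 :: real
  assumes basis: "orthonormal_pc_basis \<rho> \<phi> k1"
    and g_pos: "g > 0"
    and open_dom: "open D"
    and pt: "(x0, y0) \<in> D"
    and smooth_h: "smooth_on D h"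
    and smooth_qx: "smooth_on D qx"
    and smooth_qy: "smooth_on D qy"
    and smooth_B: "smooth_on D B"
    and posdef: "\<forall>p\<in>D. pos_def (Pm (Mtens \<rho> \<phi>) (h p))"
  shows "(\<lambda>(dx, dy). norm
            (scheme_rhs g (Mtens \<rho> \<phi>) dx dy
               (\<lambda>i j. let p = (x0 + real_of_int i * dx, y0 + real_of_int j * dy)
                      in (h p, qx p, qy p))
               (\<lambda>i j. B (x0 + real_of_int i * dx, y0 + real_of_int j * dy)) 0 0
             - pde_rhs g (Mtens \<rho> \<phi>) (\<lambda>p. (h p, qx p, qy p)) B x0 y0))
         \<in> O[(at (0, 0) within {p. fst p > 0 \<and> snd p > 0})](\<lambda>(dx, dy). dx\<^sup>2 + dy\<^sup>2)"
proof -
  define M where "M = Mtens \<rho> \<phi>"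
  obtain r where r: "r > 0" "ball (x0, y0) r \<subseteq> D" using open_dom pt open_contains_ball by blast
  have evx: "eventually (\<lambda>t. invertible (Pm M (h (x0 + t, y0)))) (nhds 0)"
  proof -
    have "eventually (\<lambda>t::real. \<bar>t\<bar> < r) (nhds 0)" by (rule eventually_abs_lt) fact
    then show ?thesis
    proof eventually_elim
      case (elim t)
      then have "(x0 + t, y0) \<in> D" using r by (auto simp: dist_Pair_Pair dist_real_def)
      then show ?case using posdef pos_def_invertible unfolding M_def by blast
    qed
  qed
  have evy: "eventually (\<lambda>t. invertible (Pm M (h (x0, y0 + t)))) (nhds 0)"
  proof -
    have "eventually (\<lambda>t::real. \<bar>t\<bar> < r) (nhds 0)" by (rule eventually_abs_lt) fact
    then show ?thesis
    proof eventually_elim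
      case (elim t)
      then have "(x0, y0 + t) \<in> D" using r by (auto simp: dist_Pair_Pair dist_real_def)
      then show ?case using posdef pos_def_invertible unfolding M_def by blast
    qed
  qed
  obtain hx1 hx2 where HX: "texp (\<lambda>t. h (x0 + t, y0)) (h (x0 + 0, y0)) hx1 hx2"
    using line_texp_x[OF smooth_h open_dom pt] by blast
  obtain qxx1 qxx2 where QXX: "texp (\<lambda>t. qx (x0 + t, y0)) (qx (x0 + 0, y0)) qxx1 qxx2"
    using line_texp_x[OF smooth_qx open_dom pt] by blast
  obtain qyx1 qyx2 where QYX: "texp (\<lambda>t. qy (x0 + t, y0)) (qy (x0 + 0, y0)) qyx1 qyx2"
    using line_texp_x[OF smooth_qy open_dom pt] by blast
  obtain bx1 bx2 where BX: "texp (\<lambda>t. B (x0 + t, y0)) (B (x0 + 0, y0)) bx1 bx2"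
    using line_texp_x[OF smooth_B open_dom pt] by blast
  obtain hy1 hy2 where HY: "texp (\<lambda>t. h (x0, y0 + t)) (h (x0, y0 + 0)) hy1 hy2"
    using line_texp_y[OF smooth_h open_dom pt] by blast
  obtain qxy1 qxy2 where QXY: "texp (\<lambda>t. qx (x0, y0 + t)) (qx (x0, y0 + 0)) qxy1 qxy2"
    using line_texp_y[OF smooth_qx open_dom pt] by blast
  obtain qyy1 qyy2 where QYY: "texp (\<lambda>t. qy (x0, y0 + t)) (qy (x0, y0 + 0)) qyy1 qyy2"
    using line_texp_y[OF smooth_qy open_dom pt] by blast
  obtain by1 by2 where BY: "texp (\<lambda>t. B (x0, y0 + t)) (B (x0, y0 + 0)) by1 by2"
    using line_texp_y[OF smooth_B open_dom pt] by blast
  obtain \<Phi> \<beta> Cx dX where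
    dF: "((\<lambda>s. Fhat g M (h (x0 + s, y0), qx (x0 + s, y0), qy (x0 + s, y0))) has_vector_derivative \<Phi>) (at 0)"
    and dBx: "((\<lambda>s. B (x0 + s, y0)) has_vector_derivative \<beta>) (at 0)"
    and dX: "dX > 0"
    and bX: "\<And>t. 0 < t \<Longrightarrow> t < dX \<Longrightarrow> norm (
       - (1/t) *\<^sub>R (FEC g M (h (x0 + 0, y0), qx (x0 + 0, y0), qy (x0 + 0, y0)) (h (x0 + t, y0), qx (x0 + t, y0), qy (x0 + t, y0))
           - FEC g M (h (x0 + - t, y0), qx (x0 + - t, y0), qy (x0 + - t, y0)) (h (x0 + 0, y0), qx (x0 + 0, y0), qy (x0 + 0, y0)))
       + (0, - (g / (2 * t)) *\<^sub>R (Pm M (avg (h (x0 + 0, y0)) (h (x0 + t, y0))) *v (B (x0 + t, y0) - B (x0 + 0, y0))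
           + Pm M (avg (h (x0 + - t, y0)) (h (x0 + 0, y0))) *v (B (x0 + 0, y0) - B (x0 + - t, y0))), 0)
       - (- \<Phi> + (0, - g *\<^sub>R (Pm M (h (x0 + 0, y0)) *v \<beta>), 0))) \<le> Cx * t^2"
    using dir_x[OF HX QXX QYX BX evx[unfolded M_def], of g, folded M_def] by blast
  obtain \<Gamma> \<gamma> Cy dY where
    dG: "((\<lambda>s. Ghat g M (h (x0, y0 + s), qx (x0, y0 + s), qy (x0, y0 + s))) has_vector_derivative \<Gamma>) (at 0)"
    and dBy: "((\<lambda>s. B (x0, y0 + s)) has_vector_derivative \<gamma>) (at 0)"
    and dY: "dY > 0"
    and bY: "\<And>t. 0 < t \<Longrightarrow> t < dY \<Longrightarrow> norm (
       - (1/t) *\<^sub>R (GEC g M (h (x0, y0 + 0), qx (x0, y0 + 0), qy (x0, y0 + 0)) (h (x0, y0 + t), qx (x0, y0 + t), qy (x0, y0 + t))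
           - GEC g M (h (x0, y0 + - t), qx (x0, y0 + - t), qy (x0, y0 + - t)) (h (x0, y0 + 0), qx (x0, y0 + 0), qy (x0, y0 + 0)))
       + (0, 0, - (g / (2 * t)) *\<^sub>R (Pm M (avg (h (x0, y0 + 0)) (h (x0, y0 + t))) *v (B (x0, y0 + t) - B (x0, y0 + 0))
           + Pm M (avg (h (x0, y0 + - t)) (h (x0, y0 + 0))) *v (B (x0, y0 + 0) - B (x0, y0 + - t))))
       - (- \<Gamma> + (0, 0, - g *\<^sub>R (Pm M (h (x0, y0 + 0)) *v \<gamma>)))) \<le> Cy * t^2"
    using dir_y[OF HY QXY QYY BY evy[unfolded M_def], of g, folded M_def] by blast
  have vdF: "vector_derivative (\<lambda>s. Fhat g M (h (s, y0), qx (s, y0), qy (s, y0))) (at x0) = \<Phi>"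
    using dF by (intro vd_shift) simp
  have vdG: "vector_derivative (\<lambda>s. Ghat g M (h (x0, s), qx (x0, s), qy (x0, s))) (at y0) = \<Gamma>"
    using dG by (intro vd_shift) simp
  have vdBx: "vector_derivative (\<lambda>s. B (s, y0)) (at x0) = \<beta>"
    using dBx by (intro vd_shift) simp
  have vdBy: "vector_derivative (\<lambda>s. B (x0, s)) (at y0) = \<gamma>"
    using dBy by (intro vd_shift) simp
  define Ex where "Ex t = 
       - (1/t) *\<^sub>R (FEC g M (h (x0 + 0, y0), qx (x0 + 0, y0), qy (x0 + 0, y0)) (h (x0 + t, y0), qx (x0 + t, y0), qy (x0 + t, y0))
           - FEC g M (h (x0 + - t, y0), qx (x0 + - t, y0), qy (x0 + - t, y0)) (h (x0 + 0, y0), qx (x0 + 0, y0), qy (x0 + 0, y0)))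
       + (0, - (g / (2 * t)) *\<^sub>R (Pm M (avg (h (x0 + 0, y0)) (h (x0 + t, y0))) *v (B (x0 + t, y0) - B (x0 + 0, y0))
           + Pm M (avg (h (x0 + - t, y0)) (h (x0 + 0, y0))) *v (B (x0 + 0, y0) - B (x0 + - t, y0))), 0)
       - (- \<Phi> + (0, - g *\<^sub>R (Pm M (h (x0 + 0, y0)) *v \<beta>), 0))" for t
  define Ey where "Ey t = 
       - (1/t) *\<^sub>R (GEC g M (h (x0, y0 + 0), qx (x0, y0 + 0), qy (x0, y0 + 0)) (h (x0, y0 + t), qx (x0, y0 + t), qy (x0, y0 + t))
           - GEC g M (h (x0, y0 + - t), qx (x0, y0 + - t), qy (x0, y0 + - t)) (h (x0, y0 + 0), qx (x0, y0 + 0), qy (x0, y0 + 0)))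
       + (0, 0, - (g / (2 * t)) *\<^sub>R (Pm M (avg (h (x0, y0 + 0)) (h (x0, y0 + t))) *v (B (x0, y0 + t) - B (x0, y0 + 0))
           + Pm M (avg (h (x0, y0 + - t)) (h (x0, y0 + 0))) *v (B (x0, y0 + 0) - B (x0, y0 + - t))))
       - (- \<Gamma> + (0, 0, - g *\<^sub>R (Pm M (h (x0, y0 + 0)) *v \<gamma>)))" for t
  have eq: "scheme_rhs g M dx dy
               (\<lambda>i j. let p = (x0 + real_of_int i * dx, y0 + real_of_int j * dy)
                      in (h p, qx p, qy p))
               (\<lambda>i j. B (x0 + real_of_int i * dx, y0 + real_of_int j * dy)) 0 0
             - pde_rhs g M (\<lambda>p. (h p, qx p, qy p)) B x0 y0 = Ex dx + Ey dy" for dx dy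
    unfolding scheme_rhs_def Sdisc_def pde_rhs_def Ex_def Ey_def
    by (simp add: vdF vdG vdBx vdBy Let_def depth_def Shat_def prod_eq_iff algebra_simps)
  have eqf: "(\<lambda>(dx, dy). norm
            (scheme_rhs g (Mtens \<rho> \<phi>) dx dy
               (\<lambda>i j. let p = (x0 + real_of_int i * dx, y0 + real_of_int j * dy)
                      in (h p, qx p, qy p))
               (\<lambda>i j. B (x0 + real_of_int i * dx, y0 + real_of_int j * dy)) 0 0
             - pde_rhs g (Mtens \<rho> \<phi>) (\<lambda>p. (h p, qx p, qy p)) B x0 y0))
      = (\<lambda>(dx, dy). norm (Ex dx + Ey dy))"
    unfolding M_def[symmetric] eq by simp
  have bound: "norm (Ex dx + Ey dy) \<le> (\<bar>Cx\<bar> + \<bar>Cy\<bar>) * (dx^2 + dy^2)"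
    if "0 < dx" "dx < dX" "0 < dy" "dy < dY" for dx dy
  proof -
    have "norm (Ex dx + Ey dy) \<le> norm (Ex dx) + norm (Ey dy)" by (rule norm_triangle_ineq)
    also have "\<dots> \<le> Cx * dx^2 + Cy * dy^2"
      using bX[OF that(1,2)] bY[OF that(3,4)] unfolding Ex_def Ey_def by (rule add_mono)
    also have "\<dots> \<le> \<bar>Cx\<bar> * dx^2 + \<bar>Cy\<bar> * dy^2"
      by (intro add_mono mult_right_mono) auto
    also have "\<dots> \<le> (\<bar>Cx\<bar> + \<bar>Cy\<bar>) * (dx^2 + dy^2)"
      by (simp add: algebra_simps)
    finally show ?thesis .
  qed
  show ?thesis
    unfolding eqf
    apply (rule bigoI[where c = "\<bar>Cx\<bar> + \<bar>Cy\<bar>"])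
    apply (unfold eventually_at)
    apply (rule exI[of _ "min dX dY"])
    apply (intro conjI ballI impI)
    subgoal using dX dY by simp
    subgoal for p
      using bound[of "fst p" "snd p"] dist_fst_le[of p "(0,0)"] dist_snd_le[of p "(0,0)"]
      by (cases p) auto
    done
qed


end
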